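(* Let $\kappa,\beta$ be real numbers with $\kappa\beta<0$ (in particular $\kappa\neq0$). Let $\mathcal{H}(\kappa,\beta)$ be the operator $\mathcal{H}(\kappa,\beta)\phi=-\phi''$ in $L_2(\mathbb{R})$ with domain consisting of the functions $\phi\in W_2^2(\mathbb{R}\setminus\{0\})$ satisfying $$\phi(+0)=\kappa\,\phi(-0),\qquad \phi'(+0)=\beta\,\phi(-0)+\kappa^{-1}\phi'(-0).$$ Then $\mathcal{H}(\kappa,\beta)$ possesses a unique eigenvalue $$E=-\Big(\frac{\kappa\beta}{\kappa^2+1}\Big)^2.$$ *)

theory Defs
  imports "HOL-Analysis.Analysis"
begin

definition L2_on :: "real set \<Rightarrow> (real \<Rightarrow> complex) \<Rightarrow> bool" where
  "L2_on S f \<longleftrightarrow> f measurable_on S \<and> (\<lambda>x. (norm (f x))^2) integrable_on S"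

text \<open>Sobolev space W_2^2 on an open interval S: phi is differentiable with derivative
  phi', phi' is absolutely continuous with (weak) derivative phi'', and phi, phi', phi''
  are all square integrable on S.\<close>
definition W22_on :: "real set \<Rightarrow> (real \<Rightarrow> complex) \<Rightarrow> (real \<Rightarrow> complex) \<Rightarrow> (real \<Rightarrow> complex) \<Rightarrow> bool" where
  "W22_on S \<phi> \<phi>' \<phi>'' \<longleftrightarrow>
     (\<forall>x\<in>S. (\<phi> has_vector_derivative \<phi>' x) (at x)) \<and>
     (\<forall>x\<in>S. \<forall>y\<in>S. x \<le> y \<longrightarrow> (\<phi>'' has_integral (\<phi>' y - \<phi>' x)) {x..y}) \<and>
     L2_on S \<phi> \<and> L2_on S \<phi>' \<and> L2_on S \<phi>''"

definition in_dom_H :: "real \<Rightarrow> real \<Rightarrow> (real \<Rightarrow> complex) \<Rightarrow> (real \<Rightarrow> complex) \<Rightarrow> (real \<Rightarrow> complex) \<Rightarrow> bool" where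
  "in_dom_H \<kappa> \<beta> \<phi> \<phi>' \<phi>'' \<longleftrightarrow>
     W22_on {..<0} \<phi> \<phi>' \<phi>'' \<and> W22_on {0<..} \<phi> \<phi>' \<phi>'' \<and>
     (\<exists>pm pp dm dp.
        (\<phi> \<longlongrightarrow> pm) (at_left 0) \<and> (\<phi> \<longlongrightarrow> pp) (at_right 0) \<and>
        (\<phi>' \<longlongrightarrow> dm) (at_left 0) \<and> (\<phi>' \<longlongrightarrow> dp) (at_right 0) \<and>
        pp = complex_of_real \<kappa> * pm \<and>
        dp = complex_of_real \<beta> * pm + complex_of_real (inverse \<kappa>) * dm)"

definition is_eigenvalue_H :: "real \<Rightarrow> real \<Rightarrow> complex \<Rightarrow> bool" where
  "is_eigenvalue_H \<kappa> \<beta> lam \<longleftrightarrow>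
     (\<exists>\<phi> \<phi>' \<phi>''. in_dom_H \<kappa> \<beta> \<phi> \<phi>' \<phi>'' \<and>
        \<not> (AE x in lebesgue. \<phi> x = 0) \<and>
        (AE x in lebesgue. x \<noteq> 0 \<longrightarrow> - \<phi>'' x = lam * \<phi> x))"

end

theory Submission
  imports Defs
begin

lemma ode_deriv:
  fixes \<phi> \<phi>' \<phi>'' :: "real \<Rightarrow> complex" and lam :: complex
  assumes S: "open S"
    and d0: "\<forall>x\<in>S. (\<phi> has_vector_derivative \<phi>' x) (at x)"
    and d1: "\<forall>x\<in>S. \<forall>y\<in>S. x \<le> y \<longrightarrow> (\<phi>'' has_integral (\<phi>' y - \<phi>' x)) {x..y}"
    and ae: "AE x in lebesgue. x \<noteq> 0 \<longrightarrow> - \<phi>'' x = lam * \<phi> x"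
    and S0: "0 \<notin> S"
    and x: "x \<in> S"
  shows "(\<phi>' has_vector_derivative (- lam * \<phi> x)) (at x)"
proof -
  obtain e where e: "e > 0" "cball x e \<subseteq> S" using S x open_contains_cball by blast
  define a where "a = x - e"
  define b where "b = x + e"
  have ab: "{a..b} \<subseteq> S" using e unfolding a_def b_def cball_eq_atLeastAtMost by simp
  from ae obtain N where N0: "{y \<in> space lebesgue. \<not> (y \<noteq> 0 \<longrightarrow> - \<phi>'' y = lam * \<phi> y)} \<subseteq> N"
     "emeasure lebesgue N = 0" "N \<in> sets lebesgue"
    by (rule AE_E)
  then have N: "N \<in> null_sets lebesgue" "{y. \<not> (y \<noteq> 0 \<longrightarrow> - \<phi>'' y = lam * \<phi> y)} \<subseteq> N"
    by auto
  have negN: "negligible N" using N(1) negligible_iff_null_sets by blast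
  define g where "g y = - lam * \<phi> y" for y
  have cont: "continuous_on {a..b} \<phi>"
    using ab d0 by (meson continuous_at_imp_continuous_on has_vector_derivative_continuous subsetD)
  have gcont: "continuous_on {a..b} g" unfolding g_def by (intro continuous_intros cont)
  have eq: "\<phi>' y = \<phi>' a + integral {a..y} g" if "y \<in> {a..b}" for y
  proof -
    have "a \<in> S" "y \<in> S" using ab that by auto
    then have "(\<phi>'' has_integral (\<phi>' y - \<phi>' a)) {a..y}" using d1 that by auto
    moreover have "\<phi>'' z = g z" if "z \<in> {a..y} - N" for z
    proof -
      have "z \<in> S" using that ab \<open>y \<in> {a..b}\<close> by auto
      then have "z \<noteq> 0" using S0 by auto
      moreover have "z \<notin> N" using that by auto
      ultimately have "- \<phi>'' z = lam * \<phi> z" using N(2) by blast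
      then have "- (lam * \<phi> z) = \<phi>'' z" by (rule minus_equation_iff[THEN iffD1])
      then show ?thesis unfolding g_def by (metis mult_minus_left)
    qed
    ultimately have "(g has_integral (\<phi>' y - \<phi>' a)) {a..y}"
      using has_integral_spike_eq[OF negN, of "{a..y}" g \<phi>''] by auto
    then show ?thesis by (simp add: integral_unique)
  qed
  have "((\<lambda>u. \<phi>' a + integral {a..u} g) has_vector_derivative g x) (at x within {a..b})"
  proof -
    have "x \<in> {a..b}" using e unfolding a_def b_def by simp
    from has_vector_derivative_add[OF has_vector_derivative_const[of "\<phi>' a"] integral_has_vector_derivative[OF gcont this]]
    show ?thesis by simp
  qed
  then have "((\<lambda>u. \<phi>' a + integral {a..u} g) has_vector_derivative g x) (at x within {a<..<b})"
    by (rule has_vector_derivative_within_subset) auto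
  moreover have xab: "x \<in> {a<..<b}" using e unfolding a_def b_def by simp
  ultimately have D: "((\<lambda>u. \<phi>' a + integral {a..u} g) has_vector_derivative g x) (at x)"
    using at_within_open[OF xab open_greaterThanLessThan] by metis
  have E: "\<phi>' a + integral {a..u} g = \<phi>' u" if "u \<in> {a<..<b}" for u
    using eq[of u] that by simp
  have "(\<phi>' has_vector_derivative g x) (at x)"
    by (rule has_vector_derivative_transform_within_open[OF D open_greaterThanLessThan xab E])
  then show ?thesis unfolding g_def .
qed

lemma exp_vd: "((\<lambda>x::real. exp (k * complex_of_real x)) has_vector_derivative k * exp (k * complex_of_real x)) (at x within s)"
  by (auto intro!: derivative_eq_intros has_vector_derivative_real_field)

lemma lower_bound_integral:
  fixes h :: "real \<Rightarrow> real"
  assumes "h integrable_on S" "{a..b} \<subseteq> S" "\<forall>x\<in>S. c \<le> h x" "0 \<le> c" "a \<le> b"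
  shows "c * (b - a) \<le> integral S h"
proof -
  have hi: "h integrable_on {a..b}" using integrable_on_subinterval assms by blast
  have "c * (b - a) = integral {a..b} (\<lambda>_. c)" using assms by simp
  also have "\<dots> \<le> integral {a..b} h"
    using assms hi by (intro integral_le) auto
  also have "\<dots> \<le> integral S h"
    using assms hi by (intro integral_subset_le) (auto intro: order_trans)
  finally show ?thesis .
qed

lemma not_int_right:
  fixes h :: "real \<Rightarrow> real"
  assumes "h integrable_on {0<..}" "c > 0" "\<forall>x\<in>{0<..}. c \<le> h x"
  shows False
proof -
  define I where "I = integral {0<..} h"
  define b where "b = max 2 (I / c + 2)"
  have A: "c * (b - 1) \<le> I" unfolding I_def
    using assms by (intro lower_bound_integral) (auto simp: b_def)
  have "I / c + 1 \<le> b - 1" unfolding b_def by auto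
  then have "c * (I / c + 1) \<le> c * (b - 1)" using assms by (intro mult_left_mono) auto
  moreover have "c * (I / c + 1) = I + c" using assms by (simp add: distrib_left)
  ultimately have "I + c \<le> c * (b - 1)" by simp
  show False using A \<open>I + c \<le> c * (b - 1)\<close> assms by auto
qed

lemma not_int_left:
  fixes h :: "real \<Rightarrow> real"
  assumes "h integrable_on {..<0}" "c > 0" "\<forall>x\<in>{..<0}. c \<le> h x"
  shows False
proof -
  define I where "I = integral {..<0} h"
  define b where "b = max 2 (I / c + 2)"
  have A: "c * (-1 - - b) \<le> I" unfolding I_def
    using assms by (intro lower_bound_integral) (auto simp: b_def)
  have "I / c + 1 \<le> b - 1" unfolding b_def by auto
  then have "c * (I / c + 1) \<le> c * (b - 1)" using assms by (intro mult_left_mono) auto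
  moreover have "c * (I / c + 1) = I + c" using assms by (simp add: distrib_left)
  ultimately have "I + c \<le> c * (b - 1)" by simp
  show False using A \<open>I + c \<le> c * (b - 1)\<close> assms by auto
qed

lemma vd_zero_const:
  fixes v :: "real \<Rightarrow> complex"
  assumes "convex S" "\<And>x. x \<in> S \<Longrightarrow> (v has_vector_derivative 0) (at x)"
  shows "\<exists>c. \<forall>x\<in>S. v x = c"
  apply (rule has_derivative_zero_constant[OF assms(1)])
  using assms(2) unfolding has_vector_derivative_def
  by (auto intro: has_derivative_at_withinI)

lemma right_half:
  fixes \<phi> \<phi>' \<phi>'' :: "real \<Rightarrow> complex" and lam k :: complex
  assumes W: "W22_on {0<..} \<phi> \<phi>' \<phi>''"
    and ae: "AE x in lebesgue. x \<noteq> 0 \<longrightarrow> - \<phi>'' x = lam * \<phi> x"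
    and k: "lam = - (k * k)" "Re k \<ge> 0"
  shows "\<exists>D. \<forall>x\<in>{0<..}. \<phi> x = D * exp (-k * of_real x) \<and> \<phi>' x = -k * (D * exp (-k * of_real x))"
proof -
  let ?S = "{0<..} :: real set"
  have d0: "\<forall>x\<in>?S. (\<phi> has_vector_derivative \<phi>' x) (at x)"
    and d1: "\<forall>x\<in>?S. \<forall>y\<in>?S. x \<le> y \<longrightarrow> (\<phi>'' has_integral (\<phi>' y - \<phi>' x)) {x..y}"
    and L0: "L2_on ?S \<phi>" and L1: "L2_on ?S \<phi>'"
    using W unfolding W22_on_def by auto
  have dd: "(\<phi>' has_vector_derivative (- lam * \<phi> x)) (at x)" if "x \<in> ?S" for x
    using ode_deriv[OF _ d0 d1 ae _ that] by auto
  define v where "v x = (\<phi>' x + k * \<phi> x) * exp (-k * of_real x)" for x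
  have "(v has_vector_derivative 0) (at x)" if x: "x \<in> ?S" for x
  proof -
    have "(v has_vector_derivative ((\<phi>' x + k * \<phi> x) * (-k * exp (-k * of_real x)) + (- lam * \<phi> x + k * \<phi>' x) * exp (-k * of_real x))) (at x)"
      unfolding v_def
      by (intro has_vector_derivative_mult has_vector_derivative_add exp_vd dd x
          has_vector_derivative_mult_right[OF d0[rule_format, OF x]])
    moreover have "(\<phi>' x + k * \<phi> x) * (-k * exp (-k * of_real x)) + (- lam * \<phi> x + k * \<phi>' x) * exp (-k * of_real x) = 0"
      using k(1) by (simp add: algebra_simps)
    ultimately show ?thesis by simp
  qed
  then obtain C where C: "\<forall>x\<in>?S. v x = C" using vd_zero_const[of ?S v] by auto
  have uC: "\<phi>' x + k * \<phi> x = C * exp (k * of_real x)" if "x \<in> ?S" for x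
  proof -
    have "(\<phi>' x + k * \<phi> x) = v x * exp (k * of_real x)" unfolding v_def
      by (simp add: mult.assoc flip: exp_add)
    then show ?thesis using C that by simp
  qed
  have C0: "C = 0"
  proof (rule ccontr)
    assume "C \<noteq> 0"
    define h where "h x = 2 * (norm (\<phi>' x))^2 + 2 * (norm k)^2 * (norm (\<phi> x))^2" for x
    have hi: "h integrable_on ?S" unfolding h_def
      using L0 L1 unfolding L2_on_def
      using integrable_cmul[of "\<lambda>x. (norm (\<phi> x))^2" ?S "2 * (norm k)^2"]
        integrable_cmul[of "\<lambda>x. (norm (\<phi>' x))^2" ?S "2"]
      by (intro integrable_add) auto
    have "(norm C)^2 \<le> h x" if x: "x \<in> ?S" for x
    proof -
      have "norm (exp (k * of_real x)) \<ge> 1" using x k(2) by (simp add: norm_exp_eq_Re)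
      then have "norm C \<le> norm (C * exp (k * of_real x))"
        by (simp add: norm_mult mult_le_cancel_left1)
      also have "\<dots> = norm (\<phi>' x + k * \<phi> x)" using uC x by simp
      also have "\<dots> \<le> norm (\<phi>' x) + norm k * norm (\<phi> x)"
        by (metis norm_mult norm_triangle_ineq)
      finally have A: "norm C \<le> norm (\<phi>' x) + norm k * norm (\<phi> x)" .
      have "(norm C)^2 \<le> (norm (\<phi>' x) + norm k * norm (\<phi> x))^2"
        using A by (intro power_mono) auto
      also have "\<dots> \<le> h x"
      proof -
        have sq: "(p + q)^2 \<le> 2 * p^2 + 2 * q^2" for p q :: real
          using zero_le_power2[of "p - q"] by (simp add: power2_sum power2_diff)
        show ?thesis using sq[of "norm (\<phi>' x)" "norm k * norm (\<phi> x)"]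
          by (simp add: power_mult_distrib h_def)
      qed
      finally show ?thesis .
    qed
    then show False using not_int_right[OF hi, of "(norm C)^2"] \<open>C \<noteq> 0\<close> by auto
  qed
  have pd: "\<phi>' x = - k * \<phi> x" if "x \<in> ?S" for x
    using uC[OF that] C0 by (simp add: algebra_simps eq_neg_iff_add_eq_0)
  define w where "w x = \<phi> x * exp (k * of_real x)" for x
  have "(w has_vector_derivative 0) (at x)" if x: "x \<in> ?S" for x
  proof -
    have "(w has_vector_derivative (\<phi> x * (k * exp (k * of_real x)) + \<phi>' x * exp (k * of_real x))) (at x)"
      unfolding w_def
      by (intro has_vector_derivative_mult exp_vd d0[rule_format, OF x])
    then show ?thesis using pd[OF x] by (simp add: algebra_simps)
  qed
  then obtain D where D: "\<forall>x\<in>?S. w x = D" using vd_zero_const[of ?S w] by auto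
  have "\<phi> x = D * exp (-k * of_real x)" if "x \<in> ?S" for x
  proof -
    have "\<phi> x = w x * exp (-k * of_real x)" unfolding w_def
      by (simp add: mult.assoc flip: exp_add)
    then show ?thesis using D that by simp
  qed
  then show ?thesis using pd by auto
qed

lemma left_half:
  fixes \<phi> \<phi>' \<phi>'' :: "real \<Rightarrow> complex" and lam k :: complex
  assumes W: "W22_on {..<0} \<phi> \<phi>' \<phi>''"
    and ae: "AE x in lebesgue. x \<noteq> 0 \<longrightarrow> - \<phi>'' x = lam * \<phi> x"
    and k: "lam = - (k * k)" "Re k \<ge> 0"
  shows "\<exists>D. \<forall>x\<in>{..<0}. \<phi> x = D * exp (k * of_real x) \<and> \<phi>' x = k * (D * exp (k * of_real x))"
proof -
  let ?S = "{..<0} :: real set"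
  have d0: "\<forall>x\<in>?S. (\<phi> has_vector_derivative \<phi>' x) (at x)"
    and d1: "\<forall>x\<in>?S. \<forall>y\<in>?S. x \<le> y \<longrightarrow> (\<phi>'' has_integral (\<phi>' y - \<phi>' x)) {x..y}"
    and L0: "L2_on ?S \<phi>" and L1: "L2_on ?S \<phi>'"
    using W unfolding W22_on_def by auto
  have dd: "(\<phi>' has_vector_derivative (- lam * \<phi> x)) (at x)" if "x \<in> ?S" for x
    using ode_deriv[OF _ d0 d1 ae _ that] by auto
  define v where "v x = (\<phi>' x - k * \<phi> x) * exp (k * of_real x)" for x
  have "(v has_vector_derivative 0) (at x)" if x: "x \<in> ?S" for x
  proof -
    have "(v has_vector_derivative ((\<phi>' x - k * \<phi> x) * (k * exp (k * of_real x)) + (- lam * \<phi> x - k * \<phi>' x) * exp (k * of_real x))) (at x)"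
      unfolding v_def
      by (intro has_vector_derivative_mult has_vector_derivative_diff exp_vd dd x
          has_vector_derivative_mult_right[OF d0[rule_format, OF x]])
    moreover have "(\<phi>' x - k * \<phi> x) * (k * exp (k * of_real x)) + (- lam * \<phi> x - k * \<phi>' x) * exp (k * of_real x) = 0"
      using k(1) by (simp add: algebra_simps)
    ultimately show ?thesis by simp
  qed
  then obtain C where C: "\<forall>x\<in>?S. v x = C" using vd_zero_const[of ?S v] by auto
  have uC: "\<phi>' x - k * \<phi> x = C * exp (-k * of_real x)" if "x \<in> ?S" for x
  proof -
    have "(\<phi>' x - k * \<phi> x) = v x * exp (-k * of_real x)" unfolding v_def
      by (simp add: mult.assoc flip: exp_add)
    then show ?thesis using C that by simp
  qed
  have C0: "C = 0"
  proof (rule ccontr)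
    assume "C \<noteq> 0"
    define h where "h x = 2 * (norm (\<phi>' x))^2 + 2 * (norm k)^2 * (norm (\<phi> x))^2" for x
    have hi: "h integrable_on ?S" unfolding h_def
      using L0 L1 unfolding L2_on_def
      using integrable_cmul[of "\<lambda>x. (norm (\<phi> x))^2" ?S "2 * (norm k)^2"]
        integrable_cmul[of "\<lambda>x. (norm (\<phi>' x))^2" ?S "2"]
      by (intro integrable_add) auto
    have "(norm C)^2 \<le> h x" if x: "x \<in> ?S" for x
    proof -
      have "norm (exp (-k * of_real x)) \<ge> 1" using x k(2) by (simp add: norm_exp_eq_Re mult_nonneg_nonpos)
      then have "norm C \<le> norm (C * exp (-k * of_real x))"
        by (simp add: norm_mult mult_le_cancel_left1)
      also have "\<dots> = norm (\<phi>' x - k * \<phi> x)" using uC x by simp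
      also have "\<dots> \<le> norm (\<phi>' x) + norm k * norm (\<phi> x)"
        by (metis norm_mult norm_triangle_ineq4)
      finally have A: "norm C \<le> norm (\<phi>' x) + norm k * norm (\<phi> x)" .
      have "(norm C)^2 \<le> (norm (\<phi>' x) + norm k * norm (\<phi> x))^2"
        using A by (intro power_mono) auto
      also have "\<dots> \<le> h x"
      proof -
        have sq: "(p + q)^2 \<le> 2 * p^2 + 2 * q^2" for p q :: real
          using zero_le_power2[of "p - q"] by (simp add: power2_sum power2_diff)
        show ?thesis using sq[of "norm (\<phi>' x)" "norm k * norm (\<phi> x)"]
          by (simp add: power_mult_distrib h_def)
      qed
      finally show ?thesis .
    qed
    then show False using not_int_left[OF hi, of "(norm C)^2"] \<open>C \<noteq> 0\<close> by auto
  qed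
  have pd: "\<phi>' x = k * \<phi> x" if "x \<in> ?S" for x
    using uC[OF that] C0 by (simp add: algebra_simps eq_neg_iff_add_eq_0)
  define w where "w x = \<phi> x * exp (-k * of_real x)" for x
  have "(w has_vector_derivative 0) (at x)" if x: "x \<in> ?S" for x
  proof -
    have "(w has_vector_derivative (\<phi> x * (-k * exp (-k * of_real x)) + \<phi>' x * exp (-k * of_real x))) (at x)"
      unfolding w_def
      by (intro has_vector_derivative_mult exp_vd d0[rule_format, OF x])
    then show ?thesis using pd[OF x] by (simp add: algebra_simps)
  qed
  then obtain D where D: "\<forall>x\<in>?S. w x = D" using vd_zero_const[of ?S w] by auto
  have "\<phi> x = D * exp (k * of_real x)" if "x \<in> ?S" for x
  proof -
    have "\<phi> x = w x * exp (k * of_real x)" unfolding w_def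
      by (simp add: mult.assoc flip: exp_add)
    then show ?thesis using D that by simp
  qed
  then show ?thesis using pd by auto
qed

lemma exp_left_int:
  fixes a :: real
  assumes a: "a > 0"
  shows "(\<lambda>x. exp (a * x)) integrable_on {..0}"
proof -
  define f where "f n x = (if x \<in> {-real n..0} then exp (a * x) else 0)" for n :: nat and x :: real
  have hi: "((\<lambda>x. exp (a * x)) has_integral (1 / a - exp (- a * real n) / a)) {-real n..0}" for n
  proof -
    have "((\<lambda>x. exp (a * x)) has_integral (exp (a * 0) / a - exp (a * (- real n)) / a)) {-real n..0}"
      using a by (intro fundamental_theorem_of_calculus)
         (auto intro!: derivative_eq_intros
               simp flip: has_real_derivative_iff_has_vector_derivative)
    then show ?thesis by simp
  qed
  have fi: "(f n has_integral (1 / a - exp (- a * real n) / a)) {..0}" for n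
    unfolding f_def using hi[of n] by (subst has_integral_restrict) auto
  have "(\<lambda>x. exp (a * x)) integrable_on {..0} \<and> (\<lambda>k. integral {..0} (f k)) \<longlonglongrightarrow> integral {..0} (\<lambda>x. exp (a * x))"
  proof (rule monotone_convergence_increasing[where f = f])
    show "f k integrable_on {..0}" for k using fi by blast
    show "f k x \<le> f (Suc k) x" if "x \<in> {..0}" for k x using that by (auto simp: f_def)
    show "(\<lambda>k. f k x) \<longlonglongrightarrow> exp (a * x)" if "x \<in> {..0}" for x
    proof -
      have "eventually (\<lambda>n. real n \<ge> -x) at_top"
        by (meson eventually_sequentiallyI nat_ceiling_le_eq)
      with that have "eventually (\<lambda>n. f n x = exp (a * x)) at_top"
        by (auto simp: f_def elim!: eventually_mono)
      thus ?thesis by (simp add: tendsto_eventually)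
    qed
    have "norm (integral {..0} (f k)) \<le> 1 / a" for k
    proof -
      define e where "e = exp (- (a * real k))"
      have e: "0 < e" "e \<le> 1" using a unfolding e_def by auto
      have "integral {..0} (f k) = (1 - e) / a" using fi[of k] unfolding e_def
        by (simp add: integral_unique diff_divide_distrib)
      moreover have "(1 - e) / a \<le> 1 / a" using e a by (intro divide_right_mono) auto
      moreover have "0 \<le> (1 - e) / a" using e a by auto
      ultimately show ?thesis by simp
    qed
    then show "bounded (range (\<lambda>k. integral {..0} (f k)))"
      by (metis (no_types, lifting) boundedI rangeE)
  qed
  then show ?thesis by blast
qed

lemma exp_left_int':
  fixes a :: real
  assumes a: "a > 0"
  shows "(\<lambda>x. exp (a * x)) integrable_on {..<0}"
proof -
  have "negligible (({..0} - {..<0}) \<union> ({..<0} - {..0::real}))"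
    by (rule negligible_subset[of "{0}"]) auto
  then show ?thesis using exp_left_int[OF a] integrable_spike_set_eq by blast
qed

lemma exp_right_int':
  fixes a :: real
  assumes a: "a > 0"
  shows "(\<lambda>x. exp (- a * x)) integrable_on {0<..}"
proof -
  have "negligible (({0..} - {0<..}) \<union> ({0<..} - {0::real..}))"
    by (rule negligible_subset[of "{0}"]) auto
  then show ?thesis using integrable_on_exp_minus_to_infinity[OF a, of 0] integrable_spike_set_eq by blast
qed

lemma not_AE_zero:
  fixes f :: "real \<Rightarrow> complex"
  assumes "\<forall>x>0. f x \<noteq> 0"
  shows "\<not> (AE x in lebesgue. f x = 0)"
proof
  assume "AE x in lebesgue. f x = 0"
  then obtain N where N: "{x \<in> space lebesgue. \<not> f x = 0} \<subseteq> N" "emeasure lebesgue N = 0" "N \<in> sets lebesgue"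
    by (rule AE_E)
  then have "negligible N" using null_setsI[OF N(2) N(3)] negligible_iff_null_sets by blast
  moreover have "cbox (1::real) 2 \<subseteq> N" using N(1) assms by auto
  ultimately have "negligible (cbox (1::real) 2)" using negligible_subset by blast
  moreover have "box (1::real) 2 \<noteq> {}" by (simp add: box_real)
  ultimately show False using negligible_interval(1) by blast
qed

lemma AE_zero:
  fixes f :: "real \<Rightarrow> complex"
  assumes "\<forall>x. x \<noteq> 0 \<longrightarrow> f x = 0"
  shows "AE x in lebesgue. f x = 0"
proof (rule AE_I'[where N="{0}"])
  show "{0::real} \<in> null_sets lebesgue" using negligible_iff_null_sets negligible_sing by blast
  show "{x \<in> space lebesgue. f x \<noteq> 0} \<subseteq> {0}" using assms by auto
qed

lemma lim_left:
  fixes f g :: "real \<Rightarrow> complex"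
  assumes "(f \<longlongrightarrow> p) (at_left 0)" "\<forall>x<0. f x = g x" "(g \<longlongrightarrow> q) (at_left 0)"
  shows "p = q"
proof -
  have "eventually (\<lambda>x. f x = g x) (at_left (0::real))"
    using eventually_at_left_real[of "-1" 0] assms(2) by (auto elim!: eventually_mono)
  then have "(g \<longlongrightarrow> p) (at_left 0)" using assms(1) tendsto_cong by blast
  then show ?thesis using assms(3) tendsto_unique trivial_limit_at_left_real by blast
qed

lemma lim_right:
  fixes f g :: "real \<Rightarrow> complex"
  assumes "(f \<longlongrightarrow> p) (at_right 0)" "\<forall>x>0. f x = g x" "(g \<longlongrightarrow> q) (at_right 0)"
  shows "p = q"
proof -
  have "eventually (\<lambda>x. f x = g x) (at_right (0::real))"
    using eventually_at_right_real[of 0 1] assms(2) by (auto elim!: eventually_mono)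
  then have "(g \<longlongrightarrow> p) (at_right 0)" using assms(1) tendsto_cong by blast
  then show ?thesis using assms(3) tendsto_unique trivial_limit_at_right_real by blast
qed

lemma exp_lim:
  fixes A k :: complex
  shows "((\<lambda>x::real. A * exp (k * of_real x)) \<longlongrightarrow> A) (at 0 within S)"
proof -
  have "((\<lambda>x::real. A * exp (k * of_real x)) \<longlongrightarrow> A * exp (k * of_real 0)) (at 0 within S)"
    by (intro tendsto_intros)
  then show ?thesis by simp
qed

lemma uniq:
  fixes \<kappa> \<beta> :: real and lam :: complex
  assumes kb: "\<kappa> * \<beta> < 0" and ev: "is_eigenvalue_H \<kappa> \<beta> lam"
  shows "lam = complex_of_real (- (((\<kappa> * \<beta>) / (\<kappa> ^ 2 + 1)) ^ 2))"
proof -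
  obtain \<phi> \<phi>' \<phi>'' where dom: "in_dom_H \<kappa> \<beta> \<phi> \<phi>' \<phi>''"
    and nz: "\<not> (AE x in lebesgue. \<phi> x = 0)"
    and ae: "AE x in lebesgue. x \<noteq> 0 \<longrightarrow> - \<phi>'' x = lam * \<phi> x"
    using ev unfolding is_eigenvalue_H_def by blast
  have WL: "W22_on {..<0} \<phi> \<phi>' \<phi>''" and WR: "W22_on {0<..} \<phi> \<phi>' \<phi>''"
    using dom unfolding in_dom_H_def by auto
  obtain pm pp dm dp where
    l1: "(\<phi> \<longlongrightarrow> pm) (at_left 0)" and l2: "(\<phi> \<longlongrightarrow> pp) (at_right 0)"
    and l3: "(\<phi>' \<longlongrightarrow> dm) (at_left 0)" and l4: "(\<phi>' \<longlongrightarrow> dp) (at_right 0)"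
    and c1: "pp = complex_of_real \<kappa> * pm"
    and c2: "dp = complex_of_real \<beta> * pm + complex_of_real (inverse \<kappa>) * dm"
    using dom unfolding in_dom_H_def by blast
  define k where "k = csqrt (- lam)"
  have kk: "lam = - (k * k)" unfolding k_def
    by (metis minus_minus power2_csqrt power2_eq_square)
  have kre: "Re k \<ge> 0" unfolding k_def by (rule Re_csqrt)
  obtain D where D: "\<forall>x\<in>{0<..}. \<phi> x = D * exp (-k * of_real x) \<and> \<phi>' x = -k * (D * exp (-k * of_real x))"
    using right_half[OF WR ae kk kre] by blast
  obtain A where A: "\<forall>x\<in>{..<0}. \<phi> x = A * exp (k * of_real x) \<and> \<phi>' x = k * (A * exp (k * of_real x))"
    using left_half[OF WL ae kk kre] by blast
  have pm: "pm = A"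
    using lim_left[OF l1, of "\<lambda>x. A * exp (k * of_real x)" A] A exp_lim by auto
  have dm: "dm = k * A"
    using lim_left[OF l3, of "\<lambda>x. (k * A) * exp (k * of_real x)" "k * A"] A exp_lim[of "k * A" k]
    by (simp add: mult.assoc)
  have e1: "((\<lambda>x. D * exp (-k * of_real x)) \<longlongrightarrow> D) (at_right 0)" by (rule exp_lim)
  have e2: "((\<lambda>x. (-k * D) * exp (-k * of_real x)) \<longlongrightarrow> -k * D) (at_right 0)" by (rule exp_lim)
  have f1: "\<forall>x>0. \<phi> x = D * exp (-k * of_real x)" using D by auto
  have f2: "\<forall>x>0. \<phi>' x = (-k * D) * exp (-k * of_real x)" using D by (auto simp: mult.assoc)
  have pp: "pp = D" by (rule lim_right[OF l2 f1 e1])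
  have dp: "dp = - k * D" by (rule lim_right[OF l4 f2 e2])
  have A0: "A \<noteq> 0"
  proof
    assume "A = 0"
    then have "D = 0" using c1 pm pp by simp
    then have "\<forall>x. x \<noteq> 0 \<longrightarrow> \<phi> x = 0" using A D \<open>A = 0\<close>
      by (metis greaterThan_iff lessThan_iff linorder_neqE_linordered_idom mult_zero_left)
    then show False using AE_zero nz by blast
  qed
  define K where "K = complex_of_real \<kappa>"
  define B where "B = complex_of_real \<beta>"
  have K0: "K \<noteq> 0" using kb unfolding K_def by auto
  have eq1: "- k * (K * A) = B * A + inverse K * (k * A)"
    using c1 c2 pm pp dm dp unfolding K_def B_def by (simp add: of_real_inverse)
  have eq2: "- k * K = B + inverse K * k"
  proof -
    have "(- k * K) * A = (B + inverse K * k) * A" using eq1 by (simp add: algebra_simps)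
    then show ?thesis using A0 mult_right_cancel by blast
  qed
  have eq3: "k * (K * K + 1) = - (B * K)"
  proof -
    have "(- k * K) * K = (B + inverse K * k) * K" using eq2 by simp
    also have "\<dots> = B * K + k" using K0 by (simp add: algebra_simps)
    finally have "- (k * K * K) = B * K + k" by simp
    then show ?thesis by algebra
  qed
  have KK: "K * K + 1 \<noteq> 0"
  proof -
    have "K * K + 1 = complex_of_real (\<kappa> * \<kappa> + 1)" unfolding K_def by simp
    moreover have "\<kappa> * \<kappa> + 1 \<noteq> 0" by (smt (verit) zero_le_square)
    ultimately show ?thesis by (metis of_real_eq_0_iff)
  qed
  have "k = - (B * K) / (K * K + 1)" using eq3 KK by (simp add: field_simps)
  then have "k = complex_of_real (- (\<beta> * \<kappa>) / (\<kappa> * \<kappa> + 1))" unfolding B_def K_def by simp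
  then show ?thesis using kk by (simp add: power2_eq_square algebra_simps)
qed

lemma sets_S: "{..<0::real} \<in> sets lebesgue" "{0::real<..} \<in> sets lebesgue"
  by simp_all

lemma L2_gen:
  fixes f :: "real \<Rightarrow> real"
  assumes S: "S \<in> sets lebesgue"
    and f: "\<forall>x\<in>S. f x = c * exp (a * x)"
    and i1: "(\<lambda>x. exp (a * x)) integrable_on S"
    and i2: "(\<lambda>x. exp ((2 * a) * x)) integrable_on S"
  shows "L2_on S (\<lambda>x. complex_of_real (f x))"
proof -
  have "(\<lambda>x. c * exp (a * x)) integrable_on S"
    using integrable_cmul[OF i1, of c] by simp
  then have "f integrable_on S" using integrable_cong[of S f "\<lambda>x. c * exp (a * x)"] f by simp
  then have "(\<lambda>x. complex_of_real (f x)) integrable_on S"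
    using has_integral_of_real unfolding integrable_on_def by blast
  then have m: "(\<lambda>x. complex_of_real (f x)) measurable_on S"
    using integrable_imp_measurable measurable_on_iff_borel_measurable[OF S] by blast
  have "(\<lambda>x. c^2 * exp ((2 * a) * x)) integrable_on S"
    using integrable_cmul[OF i2, of "c^2"] by simp
  moreover have "c^2 * exp ((2 * a) * x) = (norm (complex_of_real (f x)))^2" if "x \<in> S" for x
  proof -
    have "(norm (complex_of_real (f x)))^2 = (f x)^2" by (simp only: norm_of_real power2_abs)
    also have "\<dots> = (c * exp (a * x))^2" using f that by simp
    also have "\<dots> = c^2 * (exp (a * x))^2" by (simp add: power_mult_distrib)
    also have "(exp (a * x))^2 = exp ((2 * a) * x)"
    proof -
      have "(2 * a) * x = a * x + a * x" by simp
      then have "exp ((2 * a) * x) = exp (a * x) * exp (a * x)" by (simp only: exp_add)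
      then show ?thesis by (simp add: power2_eq_square)
    qed
    finally show ?thesis by simp
  qed
  ultimately have "(\<lambda>x. (norm (complex_of_real (f x)))^2) integrable_on S"
    using integrable_cong[of S "\<lambda>x. c^2 * exp ((2 * a) * x)" "\<lambda>x. (norm (complex_of_real (f x)))^2"]
    by blast
  then show ?thesis using m unfolding L2_on_def by blast
qed

lemma lim_tr_left:
  fixes f g :: "real \<Rightarrow> complex"
  assumes "(g \<longlongrightarrow> l) (at_left 0)" "\<forall>x<0. f x = g x"
  shows "(f \<longlongrightarrow> l) (at_left 0)"
proof -
  have "eventually (\<lambda>x. f x = g x) (at_left (0::real))"
    using eventually_at_left_real[of "-1" 0] assms(2) by (auto elim!: eventually_mono)
  then show ?thesis using assms(1) tendsto_cong by blast
qed

lemma lim_tr_right: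
  fixes f g :: "real \<Rightarrow> complex"
  assumes "(g \<longlongrightarrow> l) (at_right 0)" "\<forall>x>0. f x = g x"
  shows "(f \<longlongrightarrow> l) (at_right 0)"
proof -
  have "eventually (\<lambda>x. f x = g x) (at_right (0::real))"
    using eventually_at_right_real[of 0 1] assms(2) by (auto elim!: eventually_mono)
  then show ?thesis using assms(1) tendsto_cong by blast
qed

lemma rexp_lim:
  fixes c a :: real
  shows "((\<lambda>x::real. complex_of_real (c * exp (a * x))) \<longlongrightarrow> complex_of_real c) (at 0 within S)"
proof -
  have "((\<lambda>x::real. complex_of_real (c * exp (a * x))) \<longlongrightarrow> complex_of_real (c * exp (a * 0))) (at 0 within S)"
    by (intro tendsto_intros)
  then show ?thesis by simp
qed

lemma W22_gen:
  fixes f f1 f2 :: "real \<Rightarrow> real"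
  assumes S: "S \<in> sets lebesgue" "open S" "is_interval S" "0 \<notin> S"
    and fD: "\<And>x. x \<noteq> 0 \<Longrightarrow> (f has_real_derivative f1 x) (at x)"
    and f1D: "\<And>x. x \<noteq> 0 \<Longrightarrow> (f1 has_real_derivative f2 x) (at x)"
    and L: "L2_on S (\<lambda>x. complex_of_real (f x))" "L2_on S (\<lambda>x. complex_of_real (f1 x))"
       "L2_on S (\<lambda>x. complex_of_real (f2 x))"
  shows "W22_on S (\<lambda>x. complex_of_real (f x)) (\<lambda>x. complex_of_real (f1 x)) (\<lambda>x. complex_of_real (f2 x))"
  unfolding W22_on_def
proof (intro conjI ballI impI L)
  fix x assume "x \<in> S"
  then have "x \<noteq> 0" using S by auto
  then show "((\<lambda>x. complex_of_real (f x)) has_vector_derivative complex_of_real (f1 x)) (at x)"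
    by (rule has_vector_derivative_of_real[OF fD])
next
  fix x y assume xy: "x \<in> S" "y \<in> S" "x \<le> y"
  show "((\<lambda>x. complex_of_real (f2 x)) has_integral complex_of_real (f1 y) - complex_of_real (f1 x)) {x..y}"
  proof (rule fundamental_theorem_of_calculus[OF xy(3)])
    fix t assume t: "t \<in> {x..y}"
    then have "t \<in> S" using S(3) xy mem_is_interval_1_I by (metis atLeastAtMost_iff)
    then have "t \<noteq> 0" using S by auto
    then show "((\<lambda>x. complex_of_real (f1 x)) has_vector_derivative complex_of_real (f2 t)) (at t within {x..y})"
      using has_vector_derivative_of_real[OF f1D] has_vector_derivative_at_within by blast
  qed
qed

lemma exist:
  fixes \<kappa> \<beta> :: real
  assumes kb: "\<kappa> * \<beta> < 0"
  shows "is_eigenvalue_H \<kappa> \<beta> (complex_of_real (- (((\<kappa> * \<beta>) / (\<kappa> ^ 2 + 1)) ^ 2)))"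
proof -
  define k0 where "k0 = - (\<kappa> * \<beta>) / (\<kappa> ^ 2 + 1)"
  have den: "\<kappa> ^ 2 + 1 > 0" by (simp add: add_nonneg_pos)
  have k0: "k0 > 0" unfolding k0_def using kb den by (intro divide_pos_pos) auto
  have ka: "\<kappa> \<noteq> 0" using kb by auto
  define f where "f x = (if x < 0 then exp (k0 * x) else if 0 < x then \<kappa> * exp (- k0 * x) else 0)" for x
  define f1 where "f1 x = (if x < 0 then k0 * exp (k0 * x) else (- k0 * \<kappa>) * exp (- k0 * x))" for x
  define f2 where "f2 x = (if x < 0 then k0^2 * exp (k0 * x) else (k0^2 * \<kappa>) * exp (- k0 * x))" for x
  have dexp: "((\<lambda>x. c * exp (a * x)) has_real_derivative (a * c) * exp (a * x)) (at x)" for a c x :: real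
    by (auto intro!: derivative_eq_intros)
  have tr: "(g has_real_derivative d) (at x)"
    if "x \<in> S" "open S" "\<And>y. y \<in> S \<Longrightarrow> c * exp (a * y) = g y" "d = (a * c) * exp (a * x)"
    for g :: "real \<Rightarrow> real" and S c a d x
    using has_field_derivative_transform_within_open[OF dexp[of c a x] that(2,1,3)] that(4) by simp
  have fD: "(f has_real_derivative f1 x) (at x)" if "x \<noteq> 0" for x
  proof (cases "x < 0")
    case True
    show ?thesis
      by (rule tr[of x "{..<0}" 1 k0]) (use True in \<open>auto simp: f_def f1_def\<close>)
  next
    case False
    then have "x > 0" using that by auto
    show ?thesis
      by (rule tr[of x "{0<..}" \<kappa> "-k0"]) (use \<open>x > 0\<close> in \<open>auto simp: f_def f1_def\<close>)
  qed
  have f1D: "(f1 has_real_derivative f2 x) (at x)" if "x \<noteq> 0" for x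
  proof (cases "x < 0")
    case True
    show ?thesis
      by (rule tr[of x "{..<0}" k0 k0]) (use True in \<open>auto simp: f1_def f2_def power2_eq_square\<close>)
  next
    case False
    then have "x > 0" using that by auto
    show ?thesis
      by (rule tr[of x "{0<..}" "-k0*\<kappa>" "-k0"]) (use \<open>x > 0\<close> in \<open>auto simp: f1_def f2_def power2_eq_square\<close>)
  qed
  have iL1: "(\<lambda>x. exp (k0 * x)) integrable_on {..<0}" using exp_left_int'[OF k0] .
  have iL2: "(\<lambda>x. exp ((2 * k0) * x)) integrable_on {..<0}" using exp_left_int'[of "2 * k0"] k0 by simp
  have iR1: "(\<lambda>x. exp ((- k0) * x)) integrable_on {0<..}" using exp_right_int'[OF k0] by simp
  have iR2: "(\<lambda>x. exp ((2 * - k0) * x)) integrable_on {0<..}" using exp_right_int'[of "2 * k0"] k0 by simp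
  have WL: "W22_on {..<0} (\<lambda>x. complex_of_real (f x)) (\<lambda>x. complex_of_real (f1 x)) (\<lambda>x. complex_of_real (f2 x))"
  proof (rule W22_gen[OF sets_S(1) open_lessThan _ _ fD f1D])
    show "L2_on {..<0} (\<lambda>x. complex_of_real (f x))"
      by (rule L2_gen[OF sets_S(1) _ iL1 iL2, of _ 1]) (simp add: f_def)
    show "L2_on {..<0} (\<lambda>x. complex_of_real (f1 x))"
      by (rule L2_gen[OF sets_S(1) _ iL1 iL2, of _ k0]) (simp add: f1_def)
    show "L2_on {..<0} (\<lambda>x. complex_of_real (f2 x))"
      by (rule L2_gen[OF sets_S(1) _ iL1 iL2, of _ "k0^2"]) (simp add: f2_def)
  qed (auto simp: is_interval_convex_1)
  have WR: "W22_on {0<..} (\<lambda>x. complex_of_real (f x)) (\<lambda>x. complex_of_real (f1 x)) (\<lambda>x. complex_of_real (f2 x))"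
  proof (rule W22_gen[OF sets_S(2) open_greaterThan _ _ fD f1D])
    show "L2_on {0<..} (\<lambda>x. complex_of_real (f x))"
      by (rule L2_gen[OF sets_S(2) _ iR1 iR2, of _ \<kappa>]) (simp add: f_def)
    show "L2_on {0<..} (\<lambda>x. complex_of_real (f1 x))"
      by (rule L2_gen[OF sets_S(2) _ iR1 iR2, of _ "- k0 * \<kappa>"]) (simp add: f1_def)
    show "L2_on {0<..} (\<lambda>x. complex_of_real (f2 x))"
      by (rule L2_gen[OF sets_S(2) _ iR1 iR2, of _ "k0^2 * \<kappa>"]) (simp add: f2_def)
  qed (auto simp: is_interval_convex_1)
  have l1: "((\<lambda>x. complex_of_real (f x)) \<longlongrightarrow> complex_of_real 1) (at_left 0)"
    by (rule lim_tr_left[OF rexp_lim[of 1 k0]]) (simp add: f_def)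
  have l2: "((\<lambda>x. complex_of_real (f x)) \<longlongrightarrow> complex_of_real \<kappa>) (at_right 0)"
    by (rule lim_tr_right[OF rexp_lim[of \<kappa> "-k0"]]) (simp add: f_def)
  have l3: "((\<lambda>x. complex_of_real (f1 x)) \<longlongrightarrow> complex_of_real k0) (at_left 0)"
    by (rule lim_tr_left[OF rexp_lim[of k0 k0]]) (simp add: f1_def)
  have l4: "((\<lambda>x. complex_of_real (f1 x)) \<longlongrightarrow> complex_of_real (- k0 * \<kappa>)) (at_right 0)"
    by (rule lim_tr_right[OF rexp_lim[of "- k0 * \<kappa>" "-k0"]]) (simp add: f1_def)
  have rel: "- k0 * \<kappa> = \<beta> * 1 + inverse \<kappa> * k0"
  proof -
    have "k0 * (\<kappa> ^ 2 + 1) = - (\<kappa> * \<beta>)" unfolding k0_def using den by simp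
    then have "(- k0 * \<kappa>) * \<kappa> = (\<beta> + k0 / \<kappa>) * \<kappa>" using ka
      by (simp add: algebra_simps power2_eq_square)
    then have "- k0 * \<kappa> = \<beta> + k0 / \<kappa>" using ka mult_right_cancel by blast
    then show ?thesis by (simp add: divide_inverse mult.commute)
  qed
  have dom: "in_dom_H \<kappa> \<beta> (\<lambda>x. complex_of_real (f x)) (\<lambda>x. complex_of_real (f1 x)) (\<lambda>x. complex_of_real (f2 x))"
    unfolding in_dom_H_def
  proof (intro conjI WL WR exI)
    show "complex_of_real \<kappa> = complex_of_real \<kappa> * complex_of_real 1" by simp
    show "complex_of_real (- k0 * \<kappa>) = complex_of_real \<beta> * complex_of_real 1 + complex_of_real (inverse \<kappa>) * complex_of_real k0"
      using rel by (metis of_real_add of_real_mult)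
  qed (rule l1 l2 l3 l4)+
  have nz: "\<not> (AE x in lebesgue. complex_of_real (f x) = 0)"
    by (rule not_AE_zero) (simp add: f_def ka)
  have sq: "k0 ^ 2 = ((\<kappa> * \<beta>) / (\<kappa> ^ 2 + 1)) ^ 2" unfolding k0_def by (simp add: power2_eq_square)
  have eqn: "AE x in lebesgue. x \<noteq> 0 \<longrightarrow> - complex_of_real (f2 x) = complex_of_real (- (((\<kappa> * \<beta>) / (\<kappa> ^ 2 + 1)) ^ 2)) * complex_of_real (f x)"
  proof (rule AE_I2, rule impI)
    fix x :: real assume x: "x \<noteq> 0"
    have "f2 x = k0 ^ 2 * f x" using x by (auto simp: f_def f2_def)
    then show "- complex_of_real (f2 x) = complex_of_real (- (((\<kappa> * \<beta>) / (\<kappa> ^ 2 + 1)) ^ 2)) * complex_of_real (f x)"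
      using sq by (metis mult_minus_left of_real_minus of_real_mult)
  qed
  show ?thesis unfolding is_eigenvalue_H_def using dom nz eqn by blast
qed

theorem lemma1:
  fixes \<kappa> \<beta> :: real
  assumes "\<kappa> * \<beta> < 0"
  shows "{lam. is_eigenvalue_H \<kappa> \<beta> lam} = {complex_of_real (- (((\<kappa> * \<beta>) / (\<kappa> ^ 2 + 1)) ^ 2))}"
  using uniq[OF assms] exist[OF assms] by blast

end
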